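(* Let $\{\mathsf{P}_\theta : \theta \in \mathbb{T}\}$ be a statistical model for data $Y$ taking values in $\mathbb{Y}$, with likelihood $\theta \mapsto L_y(\theta)$ and maximum likelihood estimator $\hat\theta_y$ existing for each $y$. Let $R(y,\theta) = L_y(\theta)/L_y(\hat\theta_y)$, let $\pi_y(\theta) = \mathsf{P}_\theta\{R(Y,\theta) \le R(y,\theta)\}$, and define $\overline{\Pi}_y(H) = \sup_{\theta \in H} \pi_y(\theta)$ and $\underline{\Pi}_y(H) = 1 - \overline{\Pi}_y(H^c)$ for $H \subseteq \mathbb{T}$. Then the following uniform validity property holds: \[ \sup_{\Theta \in \mathbb{T}} \mathsf{P}_\Theta\Big( \bigcup_{H \subseteq \mathbb{T}:\, H \ni \Theta} \{ \overline{\Pi}_Y(H) \le \alpha \} \Big) \le \alpha, \quad \alpha \in [0,1], \] i.e., the probability that $\overline{\Pi}_Y(H) \le \alpha$ for some true hypothesis $H \ni \Theta$ is at most $\alpha$. Equivalently, \[ \sup_{\Theta \in \mathbb{T}} \mathsf{P}_\Theta\Big( \bigcup_{H \subseteq \mathbb{T}:\, H \not\ni \Theta} \{ \underline{\Pi}_Y(H) \ge 1-\alpha \} \Big) \le \alpha, \quad \alpha \in [0,1], \] i.e., the probability that $\underline{\Pi}_Y(H) \ge 1-\alpha$ for some false hypothesis $H \not\ni \Theta$ is at most $\alpha$.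
   Context: Here $\Theta$ denotes the true parameter value and $Y \sim \mathsf{P}_\Theta$. The pair $(\underline{\Pi}_y, \overline{\Pi}_y)$ is the necessity–possibility measure pair (the inferential model output) determined by the possibility contour $\pi_y$; the union is over all subsets $H$ of the parameter space $\mathbb{T}$ satisfying the stated membership condition. *)

theory Defs
  imports "HOL-Probability.Probability"
begin

definition rel_lik :: "('y \<Rightarrow> 't \<Rightarrow> real) \<Rightarrow> ('y \<Rightarrow> 't) \<Rightarrow> 'y \<Rightarrow> 't \<Rightarrow> real" where
  "rel_lik L mle y \<theta> = L y \<theta> / L y (mle y)"

definition contour :: "('t \<Rightarrow> 'y measure) \<Rightarrow> ('y \<Rightarrow> 't \<Rightarrow> real) \<Rightarrow> ('y \<Rightarrow> 't) \<Rightarrow> 'y \<Rightarrow> 't \<Rightarrow> real" where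
  "contour P L mle y \<theta> =
     measure (P \<theta>) {y' \<in> space (P \<theta>). rel_lik L mle y' \<theta> \<le> rel_lik L mle y \<theta>}"

definition upper_poss :: "('t \<Rightarrow> 'y measure) \<Rightarrow> ('y \<Rightarrow> 't \<Rightarrow> real) \<Rightarrow> ('y \<Rightarrow> 't) \<Rightarrow> 'y \<Rightarrow> 't set \<Rightarrow> real" where
  "upper_poss P L mle y H = (SUP \<theta>\<in>H. contour P L mle y \<theta>)"

definition lower_nec :: "('t \<Rightarrow> 'y measure) \<Rightarrow> ('y \<Rightarrow> 't \<Rightarrow> real) \<Rightarrow> ('y \<Rightarrow> 't) \<Rightarrow> 'y \<Rightarrow> 't set \<Rightarrow> real" where
  "lower_nec P L mle y H = 1 - upper_poss P L mle y (- H)"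

end

theory Submission
  imports Defs
begin

lemma cdf_valid:
  assumes D: "real_distribution D"
  and a0: "0 \<le> \<alpha>"
  shows "measure D {t. cdf D t \<le> \<alpha>} \<le> \<alpha>"
proof -
  interpret real_distribution D by (rule D)
  let ?S = "{t. cdf D t \<le> \<alpha>}"
  have down: "t \<in> ?S" if "u \<in> ?S" "t \<le> u" for t u
    using that cdf_nondecreasing[of t u] by auto
  show ?thesis
  proof (cases "?S = {}")
    case True then show ?thesis using a0 by simp
  next
    case ne: False
    show ?thesis
    proof (cases "bdd_above ?S")
      case False
      have all: "cdf D t \<le> \<alpha>" for t
      proof -
        from False obtain u where "u \<in> ?S" "t < u" unfolding bdd_above_def by (metis not_le)
        then show ?thesis using down[of u t] by auto
      qed
      have "1 \<le> \<alpha>"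
        by (rule tendsto_le[OF trivial_limit_at_top_linorder tendsto_const cdf_lim_at_top_prob]) (simp add: all)
      then show ?thesis using prob_le_1 by (meson order_trans)
    next
      case bdd: True
      define s where "s = Sup ?S"
      have le_s: "t \<in> ?S \<Longrightarrow> t \<le> s" for t unfolding s_def using bdd by (simp add: cSup_upper)
      show ?thesis
      proof (cases "s \<in> ?S")
        case True
        have "?S = {..s}" using le_s down[OF True] by auto
        moreover have "cdf D s \<le> \<alpha>" using True by simp
        ultimately show ?thesis by (simp add: cdf_def2)
      next
        case False
        have eq: "?S = {..<s}"
        proof (rule set_eqI, rule iffI)
          fix t assume "t \<in> ?S" then show "t \<in> {..<s}" using le_s False by (metis order_le_less lessThan_iff)
        next
          fix t assume "t \<in> {..<s}"
          then have "t < s" by simp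
          then obtain u where "u \<in> ?S" "t < u" using less_cSup_iff[OF ne bdd] \<open>t < s\<close> unfolding s_def by blast
          then show "t \<in> ?S" using down[of u t] by auto
        qed
        have "measure D {..<s} \<le> \<alpha>"
        proof (rule tendsto_le[OF trivial_limit_at_left_real tendsto_const cdf_at_left])
          show "\<forall>\<^sub>F x in at_left s. cdf D x \<le> \<alpha>"
            
          proof (rule eventually_mono[OF eventually_at_left_real[of "s - 1" s]])
            show "s - 1 < s" by simp
          next
            fix x assume "x \<in> {s - 1<..<s}"
            then have "x \<in> {..<s}" by simp
            then show "cdf D x \<le> \<alpha>" using eq by blast
          qed
        qed
        then show ?thesis using eq by simp
      qed
    qed
  qed
qed

theorem corollary2:
  fixes \<mu> :: "'y measure"
    and P :: "'t \<Rightarrow> 'y measure"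
    and L :: "'y \<Rightarrow> 't \<Rightarrow> real"
    and mle :: "'y \<Rightarrow> 't"
    and \<alpha> :: real
  assumes L_nonneg: "\<And>y \<theta>. L y \<theta> \<ge> 0"
    and L_meas: "\<And>\<theta>. (\<lambda>y. L y \<theta>) \<in> borel_measurable \<mu>"
    and P_density: "\<And>\<theta>. P \<theta> = density \<mu> (\<lambda>y. ennreal (L y \<theta>))"
    and P_prob: "\<And>\<theta>. prob_space (P \<theta>)"
    and mle_max: "\<And>y \<theta>. L y \<theta> \<le> L y (mle y)"
    and Lmax_meas: "(\<lambda>y. L y (mle y)) \<in> borel_measurable \<mu>"
    and \<alpha>_range: "0 \<le> \<alpha>" "\<alpha> \<le> 1"
  shows "(SUP \<Theta>. measure (P \<Theta>)
            {y \<in> space (P \<Theta>). \<exists>H. \<Theta> \<in> H \<and> upper_poss P L mle y H \<le> \<alpha>}) \<le> \<alpha>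
       \<and> (SUP \<Theta>. measure (P \<Theta>)
            {y \<in> space (P \<Theta>). \<exists>H. \<Theta> \<notin> H \<and> lower_nec P L mle y H \<ge> 1 - \<alpha>}) \<le> \<alpha>"
  proof -
  have ctr_le1: "contour P L mle y \<theta> \<le> 1" for y \<theta>
    unfolding contour_def using prob_space.prob_le_1[OF P_prob] by blast
  have key: "measure (P \<Theta>) {y \<in> space (P \<Theta>). contour P L mle y \<Theta> \<le> \<alpha>} \<le> \<alpha>"
    and keym: "{y \<in> space (P \<Theta>). contour P L mle y \<Theta> \<le> \<alpha>} \<in> sets (P \<Theta>)" for \<Theta>
  proof -
    let ?M = "P \<Theta>"
    let ?X = "\<lambda>y. rel_lik L mle y \<Theta>"
    interpret M: prob_space ?M by (rule P_prob)
    have sM: "sets ?M = sets \<mu>" using P_density by simp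
    have Xm: "?X \<in> borel_measurable ?M"
      unfolding rel_lik_def measurable_cong_sets[OF sM refl]
      using L_meas Lmax_meas by measurable
    define D where "D = distr ?M borel ?X"
    have RD: "real_distribution D" unfolding D_def using Xm by simp
    interpret D: real_distribution D by (rule RD)
    have ctr: "contour P L mle y \<Theta> = cdf D (?X y)" for y
    proof -
      have "cdf D (?X y) = measure ?M (?X -` {..?X y} \<inter> space ?M)"
        unfolding cdf_def2 D_def by (rule measure_distr[OF Xm]) simp
      also have "?X -` {..?X y} \<inter> space ?M = {y' \<in> space ?M. ?X y' \<le> ?X y}" by auto
      finally show ?thesis unfolding contour_def by simp
    qed
    have cm: "cdf D \<in> borel_measurable borel"
      by (rule borel_measurable_mono) (simp add: mono_def D.cdf_nondecreasing)
    have Sb: "{t. cdf D t \<le> \<alpha>} \<in> sets borel" using cm by measurable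
    have eqB: "{y \<in> space ?M. contour P L mle y \<Theta> \<le> \<alpha>} = ?X -` {t. cdf D t \<le> \<alpha>} \<inter> space ?M"
      using ctr by auto
    show "{y \<in> space ?M. contour P L mle y \<Theta> \<le> \<alpha>} \<in> sets ?M"
      unfolding eqB using Xm Sb by (rule measurable_sets)
    have "measure ?M (?X -` {t. cdf D t \<le> \<alpha>} \<inter> space ?M) = measure D {t. cdf D t \<le> \<alpha>}"
      using measure_distr[OF Xm Sb] unfolding D_def[symmetric] by simp
    also have "\<dots> \<le> \<alpha>" by (rule cdf_valid[OF RD \<alpha>_range(1)])
    finally show "measure ?M {y \<in> space ?M. contour P L mle y \<Theta> \<le> \<alpha>} \<le> \<alpha>"
      unfolding eqB .
  qed
  have up: "contour P L mle y \<Theta> \<le> upper_poss P L mle y H" if "\<Theta> \<in> H" for y \<Theta> H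
    unfolding upper_poss_def
    by (rule cSUP_upper[OF that]) (auto simp: bdd_above_def intro!: exI[of _ 1] ctr_le1)
  have one: "measure (P \<Theta>) {y \<in> space (P \<Theta>). \<exists>H. \<Theta> \<in> H \<and> upper_poss P L mle y H \<le> \<alpha>} \<le> \<alpha>" for \<Theta>
  proof -
    interpret M: prob_space "P \<Theta>" by (rule P_prob)
    have "{y \<in> space (P \<Theta>). \<exists>H. \<Theta> \<in> H \<and> upper_poss P L mle y H \<le> \<alpha>}
        \<subseteq> {y \<in> space (P \<Theta>). contour P L mle y \<Theta> \<le> \<alpha>}"
      using up by (fastforce intro: order_trans)
    then have "measure (P \<Theta>) {y \<in> space (P \<Theta>). \<exists>H. \<Theta> \<in> H \<and> upper_poss P L mle y H \<le> \<alpha>}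
        \<le> measure (P \<Theta>) {y \<in> space (P \<Theta>). contour P L mle y \<Theta> \<le> \<alpha>}"
      by (rule M.finite_measure_mono[OF _ keym])
    then show ?thesis using key[of \<Theta>] by linarith
  qed
  have two: "measure (P \<Theta>) {y \<in> space (P \<Theta>). \<exists>H. \<Theta> \<notin> H \<and> lower_nec P L mle y H \<ge> 1 - \<alpha>} \<le> \<alpha>" for \<Theta>
  proof -
    interpret M: prob_space "P \<Theta>" by (rule P_prob)
    have "{y \<in> space (P \<Theta>). \<exists>H. \<Theta> \<notin> H \<and> lower_nec P L mle y H \<ge> 1 - \<alpha>}
        \<subseteq> {y \<in> space (P \<Theta>). contour P L mle y \<Theta> \<le> \<alpha>}"
    proof safe
      fix y H assume "y \<in> space (P \<Theta>)" "\<Theta> \<notin> H" "lower_nec P L mle y H \<ge> 1 - \<alpha>"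
      then have "\<Theta> \<in> - H" "upper_poss P L mle y (- H) \<le> \<alpha>" unfolding lower_nec_def by auto
      then show "contour P L mle y \<Theta> \<le> \<alpha>" using up[of \<Theta> "- H" y] by linarith
    qed
    then have "measure (P \<Theta>) {y \<in> space (P \<Theta>). \<exists>H. \<Theta> \<notin> H \<and> lower_nec P L mle y H \<ge> 1 - \<alpha>}
        \<le> measure (P \<Theta>) {y \<in> space (P \<Theta>). contour P L mle y \<Theta> \<le> \<alpha>}"
      by (rule M.finite_measure_mono[OF _ keym])
    then show ?thesis using key[of \<Theta>] by linarith
  qed
  show ?thesis
    by (intro conjI cSUP_least) (auto intro: one two)
qed

end
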